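(* Let $\varphi,\gamma\in(0,1)$ with $\varphi+\gamma\ge1$, $\alpha=\min\{\varphi,\gamma\}$. For each $N$, let $(X^{(N)}_t)_t$ be a process on $\{0,1\}^N$ whose transition from $t-1$ to $t$ is generated from a driving variable $Z^{(N)}_t$ (time-homogeneous, with exchangeable coordinates) by the rule: $(U(t,k))$ i.i.d. Uniform$(0,1)$ and, independently for each $k$, if $Z_t[k]=1$ then $X_t[k]=1$ iff $X_{t-1}[k]=0$ or ($X_{t-1}[k]=1$ and $U(t,k)\ge\bar\varphi/\gamma$); if $Z_t[k]=0$ and $\varphi\le\gamma$ then $X_t[k]=0$ iff $X_{t-1}[k]=0$ or ($X_{t-1}[k]=1$ and $U(t,k)\ge\varphi/\gamma$); if $Z_t[k]=0$ and $\varphi>\gamma$ then $X_t[k]=1$ iff $X_{t-1}[k]=1$ or ($X_{t-1}[k]=0$ and $U(t,k)\ge\bar\varphi/\bar\gamma$). Suppose $\|Z^{(N)}_t\|/N\to\Theta_t$, a random variable in $[0,1]$. Let $N_{i\cdot}=|\{k:X_{t-1}[k]=i\}|$ and $N_{ij}=|\{k:X_{t-1}[k]=i,X_t[k]=j\}|$, and set $q_{01}=1-\bar\theta\bar\varphi/\bar\alpha$, $q_{11}=(\alpha\bar\theta+\theta(\varphi+\gamma-1))/\gamma$. Then, conditional on $N_{0\cdot},N_{1\cdot}$ and $\Theta_t=\theta$, as $N_{0\cdot},N_{1\cdot}\to\infty$, $$V_{01}=\frac{N_{01}-N_{0\cdot}q_{01}}{N_{0\cdot}^{1/2}},\qquad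 V_{11}=\frac{N_{11}-N_{1\cdot}q_{11}}{N_{1\cdot}^{1/2}}$$ converge in distribution to independent Normal random variables with means $0$ and variances $q_{01}\bar q_{01}$ and $q_{11}\bar q_{11}$ respectively.
   Context: $\bar a=1-a$; $\|\boldsymbol{z}\|$ is the number of ones of $\boldsymbol{z}\in\{0,1\}^N$. *)

theory Defs
  imports "HOL-Probability.Probability"
begin

text \<open>Bits are booleans: True = 1, False = 0.\<close>

definition step :: "real \<Rightarrow> real \<Rightarrow> bool \<Rightarrow> bool \<Rightarrow> real \<Rightarrow> bool" where
  "step \<phi> \<gamma> xo z u =
     (if z then (\<not> xo \<or> (xo \<and> u \<ge> (1 - \<phi>) / \<gamma>))
      else if \<phi> \<le> \<gamma> then \<not> (\<not> xo \<or> (xo \<and> u \<ge> \<phi> / \<gamma>))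
      else (xo \<or> (\<not> xo \<and> u \<ge> (1 - \<phi>) / (1 - \<gamma>))))"

text \<open>Per coordinate, conditionally on Theta = theta: Z[k] ~ Bernoulli(theta),
  U(t,k) ~ Uniform(0,1), independent.\<close>
definition coord_meas :: "real \<Rightarrow> (bool \<times> real) measure" where
  "coord_meas \<theta> = measure_pmf (bernoulli_pmf \<theta>) \<Otimes>\<^sub>M uniform_measure lborel {0..1}"

definition trans_space :: "real \<Rightarrow> nat \<Rightarrow> (nat \<Rightarrow> bool \<times> real) measure" where
  "trans_space \<theta> N = PiM {..<N} (\<lambda>_. coord_meas \<theta>)"

definition cnt0 :: "(nat \<Rightarrow> bool) \<Rightarrow> nat \<Rightarrow> nat" where
  "cnt0 x N = card {k \<in> {..<N}. \<not> x k}"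

definition cnt1 :: "(nat \<Rightarrow> bool) \<Rightarrow> nat \<Rightarrow> nat" where
  "cnt1 x N = card {k \<in> {..<N}. x k}"

text \<open>N_{01} and N_{11}, given X_{t-1} = x (on coordinates k < N).\<close>
definition cnt01 :: "real \<Rightarrow> real \<Rightarrow> (nat \<Rightarrow> bool) \<Rightarrow> nat \<Rightarrow> (nat \<Rightarrow> bool \<times> real) \<Rightarrow> nat" where
  "cnt01 \<phi> \<gamma> x N \<omega> = card {k \<in> {..<N}. \<not> x k \<and> step \<phi> \<gamma> (x k) (fst (\<omega> k)) (snd (\<omega> k))}"

definition cnt11 :: "real \<Rightarrow> real \<Rightarrow> (nat \<Rightarrow> bool) \<Rightarrow> nat \<Rightarrow> (nat \<Rightarrow> bool \<times> real) \<Rightarrow> nat" where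
  "cnt11 \<phi> \<gamma> x N \<omega> = card {k \<in> {..<N}. x k \<and> step \<phi> \<gamma> (x k) (fst (\<omega> k)) (snd (\<omega> k))}"

definition q01 :: "real \<Rightarrow> real \<Rightarrow> real \<Rightarrow> real" where
  "q01 \<phi> \<gamma> \<theta> = 1 - (1 - \<theta>) * (1 - \<phi>) / (1 - min \<phi> \<gamma>)"

definition q11 :: "real \<Rightarrow> real \<Rightarrow> real \<Rightarrow> real" where
  "q11 \<phi> \<gamma> \<theta> = (min \<phi> \<gamma> * (1 - \<theta>) + \<theta> * (\<phi> + \<gamma> - 1)) / \<gamma>"

definition V01 :: "real \<Rightarrow> real \<Rightarrow> real \<Rightarrow> (nat \<Rightarrow> bool) \<Rightarrow> nat \<Rightarrow> (nat \<Rightarrow> bool \<times> real) \<Rightarrow> real" where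
  "V01 \<phi> \<gamma> \<theta> x N \<omega> =
     (real (cnt01 \<phi> \<gamma> x N \<omega>) - real (cnt0 x N) * q01 \<phi> \<gamma> \<theta>) / sqrt (real (cnt0 x N))"

definition V11 :: "real \<Rightarrow> real \<Rightarrow> real \<Rightarrow> (nat \<Rightarrow> bool) \<Rightarrow> nat \<Rightarrow> (nat \<Rightarrow> bool \<times> real) \<Rightarrow> real" where
  "V11 \<phi> \<gamma> \<theta> x N \<omega> =
     (real (cnt11 \<phi> \<gamma> x N \<omega>) - real (cnt1 x N) * q11 \<phi> \<gamma> \<theta>) / sqrt (real (cnt1 x N))"

text \<open>Normal law with mean m and variance v (v = 0: point mass at m).\<close>
definition normal_meas :: "real \<Rightarrow> real \<Rightarrow> real measure" where
  "normal_meas m v = (if v = 0 then return borel m else density lborel (normal_density m (sqrt v)))"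

definition weak_conv_meas :: "(nat \<Rightarrow> 'a::topological_space measure) \<Rightarrow> 'a measure \<Rightarrow> bool" where
  "weak_conv_meas Ms M \<longleftrightarrow>
     (\<forall>f :: 'a \<Rightarrow> real. continuous_on UNIV f \<longrightarrow> bounded (range f) \<longrightarrow>
        (\<lambda>n. \<integral>y. f y \<partial>Ms n) \<longlonglongrightarrow> (\<integral>y. f y \<partial>M))"

end

theory Submission
  imports Defs
begin

lemma prob_space_coord: "prob_space (coord_meas \<theta>)"
  unfolding coord_meas_def
  by (intro prob_space_pair prob_space_measure_pmf prob_space_uniform_measure) auto

lemma sets_coord: "sets (coord_meas \<theta>) = sets (count_space UNIV \<Otimes>\<^sub>M (borel :: real measure))"
  unfolding coord_meas_def by (intro sets_pair_measure_cong) auto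

lemma step_meas: "(\<lambda>c. step \<phi> \<gamma> b (fst c) (snd c)) \<in> measurable (coord_meas \<theta>) (count_space UNIV)"
  unfolding measurable_cong_sets[OF sets_coord refl] step_def
  by measurable

lemma int_unif: assumes "0 \<le> c" "c \<le> 1"
  shows "(\<integral>u. of_bool (c \<le> u) \<partial>uniform_measure lborel {0..1::real}) = 1 - c"
proof -
  have "(\<integral>u. of_bool (c \<le> u) \<partial>uniform_measure lborel {0..1::real}) = 
     (\<integral>u. indicator {c..} u \<partial>uniform_measure lborel {0..1::real})"
    by (intro Bochner_Integration.integral_cong) (auto simp: indicator_def)
  also have "\<dots> = measure (uniform_measure lborel {0..1::real}) {c..}"
    by (subst Bochner_Integration.integral_indicator) auto
  also have "\<dots> = 1 - c" using assms
    by (subst measure_uniform_measure) (auto simp: Int_commute atLeastAtMost_def[symmetric])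
  finally show ?thesis .
qed

lemma int_coord:
  assumes "0 \<le> \<theta>" "\<theta> \<le> 1" "Measurable.pred (coord_meas \<theta>) P"
  shows "(\<integral>c. of_bool (P c) \<partial>coord_meas \<theta>) =
    \<theta> * (\<integral>u. of_bool (P (True, u)) \<partial>uniform_measure lborel {0..1::real})
    + (1 - \<theta>) * (\<integral>u. of_bool (P (False, u)) \<partial>uniform_measure lborel {0..1::real})"
proof -
  interpret U: prob_space "uniform_measure lborel {0..1::real}"
    by (intro prob_space_uniform_measure) auto
  interpret pair_sigma_finite "measure_pmf (bernoulli_pmf \<theta>)" "uniform_measure lborel {0..1::real}"
    by unfold_locales
  have "integrable (coord_meas \<theta>) (\<lambda>c. of_bool (P c) :: real)"
    using assms(3) prob_space_coord[of \<theta>]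
    by (intro finite_measure.integrable_const_bound[where B=1]) (auto simp: prob_space_def)
  then have "(\<integral>c. of_bool (P c) \<partial>coord_meas \<theta>) = ( (\<integral>z. (\<integral>u. of_bool (P (z,u)) \<partial>uniform_measure lborel {0..1::real}) \<partial>measure_pmf (bernoulli_pmf \<theta>)) :: real)"
    unfolding coord_meas_def by (rule integral_fst'[of "\<lambda>c. of_bool (P c)", symmetric])
  also have "\<dots> = (\<Sum>z\<in>UNIV. pmf (bernoulli_pmf \<theta>) z *\<^sub>R (\<integral>u. of_bool (P (z,u)) \<partial>uniform_measure lborel {0..1::real}))"
    by (subst integral_measure_pmf[where A=UNIV]) auto
  also have "\<dots> = \<theta> * (\<integral>u. of_bool (P (True, u)) \<partial>uniform_measure lborel {0..1::real})
    + (1 - \<theta>) * (\<integral>u. of_bool (P (False, u)) \<partial>uniform_measure lborel {0..1::real})"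
    using assms(1,2) by (simp add: UNIV_bool)
  finally show ?thesis .
qed

lemma int_unif2: assumes "0 \<le> c" "c \<le> 1"
  shows "(\<integral>u. of_bool (\<not> c \<le> u) \<partial>uniform_measure lborel {0..1::real}) = c"
proof -
  have "(\<integral>u. of_bool (\<not> c \<le> u) \<partial>uniform_measure lborel {0..1::real}) = 
     (\<integral>u. indicator {..<c} u \<partial>uniform_measure lborel {0..1::real})"
    by (intro Bochner_Integration.integral_cong) (auto simp: indicator_def)
  also have "\<dots> = measure (uniform_measure lborel {0..1::real}) {..<c}"
    by (subst Bochner_Integration.integral_indicator) auto
  also have "{0..1} \<inter> {..<c} = {0..<c}" using assms by auto
  then have "measure (uniform_measure lborel {0..1::real}) {..<c} = c" using assms
    by (subst measure_uniform_measure) (auto simp: atLeastAtMost_def[symmetric])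
  finally show ?thesis .
qed

lemma int_unif1: "(\<integral>u. 1 \<partial>uniform_measure lborel {0..1::real}) = (1::real)"
proof -
  interpret U: prob_space "uniform_measure lborel {0..1::real}"
    by (intro prob_space_uniform_measure) auto
  show ?thesis using U.prob_space by (simp add: measure_def)
qed

lemma q01_eq:
  assumes "0 < \<phi>" "\<phi> < 1" "0 < \<gamma>" "\<gamma> < 1" "\<phi> + \<gamma> \<ge> 1" "0 \<le> \<theta>" "\<theta> \<le> 1"
  shows "(\<integral>c. of_bool (step \<phi> \<gamma> False (fst c) (snd c)) \<partial>coord_meas \<theta>) = q01 \<phi> \<gamma> \<theta>"
proof -
  have "(\<integral>c. of_bool (step \<phi> \<gamma> False (fst c) (snd c)) \<partial>coord_meas \<theta>) =
    \<theta> * (\<integral>u. of_bool (step \<phi> \<gamma> False True u) \<partial>uniform_measure lborel {0..1::real})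
    + (1 - \<theta>) * (\<integral>u. of_bool (step \<phi> \<gamma> False False u) \<partial>uniform_measure lborel {0..1::real})"
    using int_coord[OF assms(6,7) step_meas] by simp
  also have "\<dots> = q01 \<phi> \<gamma> \<theta>"
  proof (cases "\<phi> \<le> \<gamma>")
    case True
    then show ?thesis using assms int_unif1 by (simp add: step_def q01_def min_def)
  next
    case False
    have "(1 - \<phi>) / (1 - \<gamma>) \<le> 1" using False assms by (simp add: divide_le_eq_1)
    then have "(\<integral>u. of_bool ((1 - \<phi>) / (1 - \<gamma>) \<le> u) \<partial>uniform_measure lborel {0..1::real})
       = 1 - (1 - \<phi>) / (1 - \<gamma>)" using assms by (intro int_unif) auto
    then show ?thesis using False assms int_unif1 apply (simp add: step_def) by (simp add: q01_def min_def field_simps)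
  qed
  finally show ?thesis .
qed

lemma q11_eq:
  assumes "0 < \<phi>" "\<phi> < 1" "0 < \<gamma>" "\<gamma> < 1" "\<phi> + \<gamma> \<ge> 1" "0 \<le> \<theta>" "\<theta> \<le> 1"
  shows "(\<integral>c. of_bool (step \<phi> \<gamma> True (fst c) (snd c)) \<partial>coord_meas \<theta>) = q11 \<phi> \<gamma> \<theta>"
proof -
  have "(\<integral>c. of_bool (step \<phi> \<gamma> True (fst c) (snd c)) \<partial>coord_meas \<theta>) =
    \<theta> * (\<integral>u. of_bool (step \<phi> \<gamma> True True u) \<partial>uniform_measure lborel {0..1::real})
    + (1 - \<theta>) * (\<integral>u. of_bool (step \<phi> \<gamma> True False u) \<partial>uniform_measure lborel {0..1::real})"
    using int_coord[OF assms(6,7) step_meas] by simp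
  also have "\<dots> = q11 \<phi> \<gamma> \<theta>"
  proof -
    have a: "(1 - \<phi>) / \<gamma> \<le> 1" using assms by (simp add: divide_le_eq_1)
    have b: "(\<integral>u. of_bool ((1 - \<phi>) / \<gamma> \<le> u) \<partial>uniform_measure lborel {0..1::real})
       = 1 - (1 - \<phi>) / \<gamma>" using assms a by (intro int_unif) auto
    show ?thesis
    proof (cases "\<phi> \<le> \<gamma>")
      case True
      have "(\<integral>u. of_bool (\<not> \<phi> / \<gamma> \<le> u) \<partial>uniform_measure lborel {0..1::real}) = \<phi> / \<gamma>"
        using assms True by (intro int_unif2) auto
      then show ?thesis using True assms b apply (simp add: step_def) by (simp add: q11_def min_def field_simps)
    next
      case False
      then show ?thesis using assms b int_unif1 apply (simp add: step_def) by (simp add: q11_def min_def field_simps)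
    qed
  qed
  finally show ?thesis .
qed


lemma indep_coords:
  assumes C: "prob_space C"
  shows "prob_space.indep_vars (PiM I (\<lambda>_. C)) (\<lambda>_. C) (\<lambda>i \<omega>. \<omega> i) I"
proof -
  interpret P: prob_space "PiM I (\<lambda>_. C)" using C by (intro prob_space_PiM)
  show ?thesis
  proof (cases "I = {}")
    case True
    show ?thesis unfolding P.indep_vars_def P.indep_sets_def using True by auto
  next
    case False
    show ?thesis
    proof (subst P.indep_vars_iff_distr_eq_PiM'[OF False])
      show "(\<lambda>\<omega>. \<omega> i) \<in> measurable (PiM I (\<lambda>_. C)) C" if "i \<in> I" for i using measurable_component_singleton[OF that, of "\<lambda>_. C"] by simp
      have "distr (PiM I (\<lambda>_. C)) (PiM I (\<lambda>_. C)) (\<lambda>x. \<lambda>i\<in>I. x i) = distr (PiM I (\<lambda>_. C)) (PiM I (\<lambda>_. C)) (\<lambda>x. x)"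
        by (intro distr_cong) (auto simp: space_PiM PiE_def extensional_restrict)
      also have "\<dots> = PiM I (\<lambda>_. C)" by simp
      also have "\<dots> = (\<Pi>\<^sub>M i\<in>I. distr (Pi\<^sub>M I (\<lambda>_. C)) C (\<lambda>\<omega>. \<omega> i))"
        by (intro PiM_cong refl distr_PiM_component[symmetric] C)
      finally show "distr (Pi\<^sub>M I (\<lambda>_. C)) (Pi\<^sub>M I (\<lambda>_. C)) (\<lambda>x. \<lambda>i\<in>I. x i) =
          (\<Pi>\<^sub>M i\<in>I. distr (Pi\<^sub>M I (\<lambda>_. C)) C (\<lambda>\<omega>. \<omega> i))" .
    qed
  qed
qed

lemma law_reindex:
  fixes f :: "'c \<Rightarrow> real" and h :: "real \<Rightarrow> real" and N m :: nat
  assumes C: "prob_space C" and fm[measurable]: "f \<in> borel_measurable C"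
    and hm[measurable]: "h \<in> borel_measurable borel"
    and A: "A \<subseteq> {..<N}" and m: "card A = m"
  shows "distr (PiM {..<N} (\<lambda>_. C)) borel (\<lambda>\<omega>. h (\<Sum>k\<in>A. f (\<omega> k)))
       = distr (PiM UNIV (\<lambda>_. C)) borel (\<lambda>\<omega>. h (\<Sum>i<m. f (\<omega> i)))"
proof -
  have finA: "finite A" using A finite_subset by blast
  obtain e where e: "bij_betw e {0..<m} A" using ex_bij_betw_nat_finite[OF finA] m by blast
  have e': "bij_betw e {..<m} A" using e by (simp add: atLeast0LessThan)
  define H where "H = (\<lambda>\<omega>::nat \<Rightarrow> 'c. h (\<Sum>i<m. f (\<omega> i)))"
  have Hm: "H \<in> borel_measurable (PiM {..<m} (\<lambda>_. C))"
    unfolding H_def by measurable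
  have R1: "distr (PiM {..<N} (\<lambda>_. C)) (PiM {..<m} (\<lambda>_. C)) (\<lambda>\<omega>. \<lambda>n\<in>{..<m}. \<omega> (e n)) = PiM {..<m} (\<lambda>_. C)"
    using distr_PiM_reindex[of "{..<N}" "\<lambda>_. C" e "{..<m}"] C e' A
    by (auto simp: bij_betw_def)
  have R2: "distr (PiM UNIV (\<lambda>_. C)) (PiM {..<m} (\<lambda>_. C)) (\<lambda>\<omega>. \<lambda>n\<in>{..<m}. \<omega> n) = PiM {..<m} (\<lambda>_. C)"
    using distr_PiM_reindex[of UNIV "\<lambda>_. C" "\<lambda>n. n" "{..<m}"] C
    by auto
  have m1: "(\<lambda>\<omega>. \<lambda>n\<in>{..<m}. \<omega> (e n)) \<in> measurable (PiM {..<N} (\<lambda>_. C)) (PiM {..<m} (\<lambda>_. C))"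
    using e' A by (intro measurable_restrict measurable_component_singleton) (auto simp: bij_betw_def)
  have m2: "(\<lambda>\<omega>. \<lambda>n\<in>{..<m}. \<omega> n) \<in> measurable (PiM UNIV (\<lambda>_. C)) (PiM {..<m} (\<lambda>_. C))"
    by (intro measurable_restrict measurable_component_singleton) auto
  have "distr (PiM {..<N} (\<lambda>_. C)) borel (\<lambda>\<omega>. h (\<Sum>k\<in>A. f (\<omega> k)))
      = distr (PiM {..<N} (\<lambda>_. C)) borel (H \<circ> (\<lambda>\<omega>. \<lambda>n\<in>{..<m}. \<omega> (e n)))"
  proof (intro distr_cong refl)
    fix \<omega> show "h (\<Sum>k\<in>A. f (\<omega> k)) = (H \<circ> (\<lambda>\<omega>. \<lambda>n\<in>{..<m}. \<omega> (e n))) \<omega>"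
      unfolding H_def comp_def using sum.reindex_bij_betw[OF e', of "\<lambda>k. f (\<omega> k)"] by simp
  qed
  also have "\<dots> = distr (PiM {..<m} (\<lambda>_. C)) borel H"
    by (subst distr_distr[symmetric, OF Hm m1]) (simp add: R1)
  also have "\<dots> = distr (PiM UNIV (\<lambda>_. C)) borel (H \<circ> (\<lambda>\<omega>. \<lambda>n\<in>{..<m}. \<omega> n))"
    by (subst distr_distr[symmetric, OF Hm m2]) (simp add: R2)
  also have "\<dots> = distr (PiM UNIV (\<lambda>_. C)) borel (\<lambda>\<omega>. h (\<Sum>i<m. f (\<omega> i)))"
    by (intro distr_cong refl) (simp add: H_def)
  finally show ?thesis .
qed

lemma law_joint:
  fixes f g :: "'c \<Rightarrow> real" and h1 h2 :: "real \<Rightarrow> real" and N :: nat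
  assumes C: "prob_space C" and [measurable]: "f \<in> borel_measurable C" "g \<in> borel_measurable C"
    and [measurable]: "h1 \<in> borel_measurable borel" "h2 \<in> borel_measurable borel"
    and A: "A \<subseteq> {..<N}" and B: "B \<subseteq> {..<N}" and AB: "A \<inter> B = {}"
  shows "distr (PiM {..<N} (\<lambda>_. C)) borel (\<lambda>\<omega>. (h1 (\<Sum>k\<in>A. f (\<omega> k)), h2 (\<Sum>k\<in>B. g (\<omega> k))))
    = distr (PiM {..<N} (\<lambda>_. C)) borel (\<lambda>\<omega>. h1 (\<Sum>k\<in>A. f (\<omega> k)))
      \<Otimes>\<^sub>M distr (PiM {..<N} (\<lambda>_. C)) borel (\<lambda>\<omega>. h2 (\<Sum>k\<in>B. g (\<omega> k)))"
proof -
  interpret P: prob_space "PiM {..<N} (\<lambda>_. C)" using C by (intro prob_space_PiM)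
  have ind: "P.indep_vars (\<lambda>_. C) (\<lambda>i \<omega>. \<omega> i) {..<N}" by (rule indep_coords[OF C])
  have iv: "P.indep_var (PiM A (\<lambda>_. C)) (\<lambda>\<omega>. restrict (\<lambda>i. \<omega> i) A) (PiM B (\<lambda>_. C)) (\<lambda>\<omega>. restrict (\<lambda>i. \<omega> i) B)"
    by (rule P.indep_var_restrict[OF ind AB A B])
  define Y1 where "Y1 = (\<lambda>\<omega>::nat \<Rightarrow> 'c. h1 (\<Sum>k\<in>A. f (\<omega> k)))"
  define Y2 where "Y2 = (\<lambda>\<omega>::nat \<Rightarrow> 'c. h2 (\<Sum>k\<in>B. g (\<omega> k)))"
  have finA: "finite A" using finite_subset[OF A] by simp
  have finB: "finite B" using finite_subset[OF B] by simp
  have m1: "Y1 \<in> borel_measurable (PiM A (\<lambda>_. C))" unfolding Y1_def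
    using finA by measurable
  have m2: "Y2 \<in> borel_measurable (PiM B (\<lambda>_. C))" unfolding Y2_def
    using finB by measurable
  have iv2: "P.indep_var borel (Y1 \<circ> (\<lambda>\<omega>. restrict (\<lambda>i. \<omega> i) A)) borel (Y2 \<circ> (\<lambda>\<omega>. restrict (\<lambda>i. \<omega> i) B))"
    by (rule P.indep_var_compose[OF iv m1 m2])
  have e1: "Y1 \<circ> (\<lambda>\<omega>. restrict (\<lambda>i. \<omega> i) A) = (\<lambda>\<omega>. h1 (\<Sum>k\<in>A. f (\<omega> k)))"
    unfolding Y1_def comp_def by (intro ext arg_cong[where f=h1] sum.cong) auto
  have e2: "Y2 \<circ> (\<lambda>\<omega>. restrict (\<lambda>i. \<omega> i) B) = (\<lambda>\<omega>. h2 (\<Sum>k\<in>B. g (\<omega> k)))"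
    unfolding Y2_def comp_def by (intro ext arg_cong[where f=h2] sum.cong) auto
  show ?thesis
    using iv2 unfolding e1 e2 P.indep_var_distribution_eq borel_prod by simp
qed


lemma int_comp:
  fixes F :: "'c \<Rightarrow> real" and i :: nat
  assumes C: "prob_space C" and Fm[measurable]: "F \<in> borel_measurable C"
  shows "(\<integral>\<omega>. F (\<omega> i) \<partial>PiM UNIV (\<lambda>_. C)) = (\<integral>c. F c \<partial>C)"
proof -
  have cm: "(\<lambda>\<omega>. \<omega> i) \<in> measurable (PiM UNIV (\<lambda>_. C)) C"
    using measurable_component_singleton[of i UNIV "\<lambda>_. C"] by simp
  have "(\<integral>c. F c \<partial>C) = (\<integral>c. F c \<partial>distr (PiM UNIV (\<lambda>_. C)) C (\<lambda>\<omega>. \<omega> i))"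
    using distr_PiM_component[of UNIV "\<lambda>_. C" i] C by simp
  also have "\<dots> = (\<integral>\<omega>. F (\<omega> i) \<partial>PiM UNIV (\<lambda>_. C))"
    by (rule integral_distr[OF cm Fm])
  finally show ?thesis by simp
qed

lemma AE_comp:
  fixes i :: nat
  assumes C: "prob_space C" and "AE c in C. Q c"
  shows "AE \<omega> in PiM UNIV (\<lambda>_. C). Q (\<omega> i)"
proof -
  have cm: "(\<lambda>\<omega>. \<omega> i) \<in> measurable (PiM UNIV (\<lambda>_. C)) C"
    using measurable_component_singleton[of i UNIV "\<lambda>_. C"] by simp
  have D: "distr (PiM UNIV (\<lambda>_. C)) C (\<lambda>\<omega>. \<omega> i) = C"
    using distr_PiM_component[of UNIV "\<lambda>_. C" i] C by simp
  have "AE c in distr (PiM UNIV (\<lambda>_. C)) C (\<lambda>\<omega>. \<omega> i). Q c"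
    unfolding D by (rule assms(2))
  then show ?thesis by (rule AE_distrD[OF cm])
qed

lemma real_distr_distr:
  assumes "prob_space M" "F \<in> borel_measurable M"
  shows "real_distribution (distr M borel F)"
  using assms unfolding real_distribution_def real_distribution_axioms_def
  by (auto intro: prob_space.prob_space_distr)

lemma rep:
  fixes C :: "'c measure" and P :: "'c \<Rightarrow> bool" and q :: real
  assumes C: "prob_space C" and Pm[measurable]: "Measurable.pred C P"
    and q: "q = (\<integral>c. of_bool (P c) \<partial>C)"
  shows "\<exists>(\<Omega>::real measure) Ym Y. prob_space \<Omega> \<and> (\<forall>m. Ym m \<in> borel_measurable \<Omega>) \<and> Y \<in> borel_measurable \<Omega> \<and>
     (\<forall>m. distr \<Omega> borel (Ym m) = distr (PiM UNIV (\<lambda>_. C)) borel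
          (\<lambda>\<omega>. ((\<Sum>i<m. of_bool (P (\<omega> i))) - real m * q) / sqrt (real m))) \<and>
     distr \<Omega> borel Y = normal_meas 0 (q * (1 - q)) \<and> (AE \<omega> in \<Omega>. (\<lambda>m. Ym m \<omega>) \<longlonglongrightarrow> Y \<omega>)"
proof -
  interpret C: prob_space C by (rule C)
  define PI where "PI = PiM UNIV (\<lambda>_::nat. C)"
  interpret PI: prob_space PI unfolding PI_def using C by (intro prob_space_PiM)
  define X where "X = (\<lambda>(i::nat) (\<omega>::nat \<Rightarrow> 'c). of_bool (P (\<omega> i)) :: real)"
  have cm[measurable]: "(\<lambda>\<omega>. \<omega> i) \<in> measurable PI C" for i
    unfolding PI_def using measurable_component_singleton[of i UNIV "\<lambda>_. C"] by simp
  have Xm[measurable]: "X i \<in> borel_measurable PI" for i unfolding X_def by measurable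
  have intC: "integrable C (\<lambda>c. of_bool (P c) :: real)"
    by (intro C.integrable_const_bound[where B=1]) auto
  have q01: "0 \<le> q" "q \<le> 1"
    unfolding q using C.prob_space by (auto intro!: integral_nonneg_AE C.integral_le_const intC)
  define F where "F = (\<lambda>m \<omega>. ((\<Sum>i<m. of_bool (P (\<omega> i))) - real m * q) / sqrt (real m))"
  have Fm[measurable]: "F m \<in> borel_measurable PI" for m unfolding F_def by measurable
  show ?thesis
  proof (cases "q * (1 - q) = 0")
    case True
    then have "q = 0 \<or> q = 1" by auto
    have AEC: "AE c in C. of_bool (P c) = q"
    proof (cases "q = 0")
      case True
      then have "(\<integral>c. of_bool (P c) \<partial>C) = (0::real)" using q by simp
      then have "AE c in C. (of_bool (P c)::real) = 0"
        by (subst integral_nonneg_eq_0_iff_AE[symmetric]) (auto intro: intC)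
      then show ?thesis using True by simp
    next
      case False
      then have q1: "q = 1" using \<open>q = 0 \<or> q = 1\<close> by simp
      have "(\<integral>c. 1 - of_bool (P c) \<partial>C) = (1::real) - q"
        using q intC C.prob_space by (subst Bochner_Integration.integral_diff) (auto simp: measure_def)
      then have "(\<integral>c. 1 - of_bool (P c) \<partial>C) = (0::real)" using q1 by simp
      then have "AE c in C. 1 - (of_bool (P c)::real) = 0"
        by (subst integral_nonneg_eq_0_iff_AE[symmetric]) (auto intro: intC)
      then show ?thesis using q1 by simp
    qed
    have "AE \<omega> in PI. \<forall>i. of_bool (P (\<omega> i)) = q"
      unfolding AE_all_countable PI_def using AE_comp[OF C AEC] by blast
    then have AEF: "AE \<omega> in PI. \<forall>m. F m \<omega> = 0"
      by eventually_elim (simp add: F_def del: sum_of_bool_eq)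
    have dF: "distr PI borel (F m) = return borel 0" for m
    proof -
      have "distr PI borel (F m) = distr PI borel (\<lambda>_. 0)"
        by (intro distr_cong_AE refl) (use AEF in auto)
      then show ?thesis by simp
    qed
    interpret R: prob_space "return borel (0::real)" by (intro prob_space_return) auto
    show ?thesis
      apply (rule exI[of _ "return borel (0::real)"], rule exI[of _ "\<lambda>m _. 0"], rule exI[of _ "\<lambda>_. 0"])
      using dF[unfolded F_def PI_def] True by (auto simp: normal_meas_def R.prob_space_axioms simp del: sum_of_bool_eq)
  next
    case False
    have qpos: "0 < q * (1 - q)" using False q01 by (simp add: less_le)
    define \<sigma> where "\<sigma> = sqrt (q * (1 - q))"
    have \<sigma>pos: "0 < \<sigma>" unfolding \<sigma>_def using qpos by simp
    have \<sigma>sq: "\<sigma>\<^sup>2 = q * (1 - q)" unfolding \<sigma>_def using qpos by simp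
    have ind0: "PI.indep_vars (\<lambda>_. C) (\<lambda>i \<omega>. \<omega> i) UNIV"
      unfolding PI_def by (rule indep_coords[OF C])
    have ind: "PI.indep_vars (\<lambda>_. borel) X UNIV"
      using PI.indep_vars_compose2[OF ind0, of "\<lambda>i c. of_bool (P c) :: real" "\<lambda>_. borel"]
      unfolding X_def by simp
    have mean: "PI.expectation (X i) = q" for i
      unfolding X_def PI_def q using int_comp[OF C, of "\<lambda>c. of_bool (P c)" i] by simp
    have sqint: "integrable PI (\<lambda>x. (X i x)\<^sup>2)" for i
      by (intro PI.integrable_const_bound[where B=1]) (auto simp: X_def)
    have var: "PI.variance (X i) = \<sigma>\<^sup>2" for i
    proof -
      have "PI.variance (X i) = (\<integral>c. (of_bool (P c) - q)\<^sup>2 \<partial>C)"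
        unfolding mean unfolding X_def PI_def
        using int_comp[OF C, of "\<lambda>c. (of_bool (P c) - q)\<^sup>2" i] by simp
      also have "\<dots> = (\<integral>c. of_bool (P c) * (1 - 2 * q) + q\<^sup>2 \<partial>C)"
        by (intro Bochner_Integration.integral_cong) (auto simp: power2_eq_square algebra_simps)
      also have "\<dots> = q * (1 - 2 * q) + q\<^sup>2"
        using intC C.prob_space q by (simp add: measure_def)
      also have "\<dots> = \<sigma>\<^sup>2" unfolding \<sigma>sq by (simp add: algebra_simps power2_eq_square)
      finally show ?thesis .
    qed
    have distrib: "distr PI borel (X i) = distr C borel (\<lambda>c. of_bool (P c) :: real)" for i
    proof -
      have D: "distr PI C (\<lambda>\<omega>. \<omega> i) = C"
        unfolding PI_def using distr_PiM_component[of UNIV "\<lambda>_. C" i] C by simp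
      have "distr PI borel (X i) = distr PI borel ((\<lambda>c. of_bool (P c) :: real) \<circ> (\<lambda>\<omega>. \<omega> i))"
        unfolding X_def comp_def ..
      also have "\<dots> = distr (distr PI C (\<lambda>\<omega>. \<omega> i)) borel (\<lambda>c. of_bool (P c) :: real)"
        by (rule distr_distr[symmetric]) auto
      finally show ?thesis unfolding D .
    qed
    have clt: "weak_conv_m (\<lambda>n. distr PI borel (\<lambda>x. (\<Sum>i<n. X i x - q) / sqrt (real n * \<sigma>\<^sup>2))) std_normal_distribution"
      by (rule PI.central_limit_theorem[OF ind mean \<sigma>pos sqint var distrib])
    have rd: "real_distribution (distr PI borel (\<lambda>x. (\<Sum>i<n. X i x - q) / sqrt (real n * \<sigma>\<^sup>2)))" for n
      by (intro real_distr_distr PI.prob_space_axioms) measurable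
    obtain \<Omega> :: "real measure" and Yseq Y where ps: "prob_space \<Omega>" and Ysm[measurable]: "\<And>n. Yseq n \<in> measurable \<Omega> borel"
      and dY: "\<And>n. distr \<Omega> borel (Yseq n) = distr PI borel (\<lambda>x. (\<Sum>i<n. X i x - q) / sqrt (real n * \<sigma>\<^sup>2))"
      and Ym: "Y \<in> measurable \<Omega> lborel" and dYY: "distr \<Omega> borel Y = std_normal_distribution"
      and conv: "\<And>x. x \<in> space \<Omega> \<Longrightarrow> (\<lambda>n. Yseq n x) \<longlonglongrightarrow> Y x"
      using Skorohod[OF rd real_dist_normal_dist clt] by metis
    interpret O: prob_space \<Omega> by (rule ps)
    have Ym'[measurable]: "Y \<in> borel_measurable \<Omega>" using Ym by simp
    have d1: "distr \<Omega> borel (\<lambda>\<omega>. \<sigma> * Yseq m \<omega>) = distr PI borel (F m)" for m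
    proof -
      have "distr \<Omega> borel (\<lambda>\<omega>. \<sigma> * Yseq m \<omega>) = distr (distr \<Omega> borel (Yseq m)) borel (\<lambda>y. \<sigma> * y)"
        by (subst distr_distr) (auto simp: comp_def)
      also have "\<dots> = distr PI borel (\<lambda>\<omega>. \<sigma> * ((\<Sum>i<m. X i \<omega> - q) / sqrt (real m * \<sigma>\<^sup>2)))"
        unfolding dY by (subst distr_distr) (auto simp: comp_def)
      also have "\<dots> = distr PI borel (F m)"
      proof (intro distr_cong refl)
        fix \<omega>
        show "\<sigma> * ((\<Sum>i<m. X i \<omega> - q) / sqrt (real m * \<sigma>\<^sup>2)) = F m \<omega>"
          unfolding F_def X_def using \<sigma>pos
          by (simp add: sum_subtractf real_sqrt_mult del: sum_of_bool_eq)
      qed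
      finally show ?thesis .
    qed
    have d2: "distr \<Omega> borel (\<lambda>\<omega>. \<sigma> * Y \<omega>) = normal_meas 0 (q * (1 - q))"
    proof -
      have "distributed \<Omega> lborel Y (normal_density 0 1)"
        unfolding distributed_def using dYY Ym
        by (simp cong: distr_cong)
      from O.normal_density_affine[OF this, of \<sigma> 0] \<sigma>pos
      have "distributed \<Omega> lborel (\<lambda>x. \<sigma> * Y x) (normal_density 0 \<sigma>)" by simp
      then have "distr \<Omega> lborel (\<lambda>x. \<sigma> * Y x) = density lborel (normal_density 0 \<sigma>)"
        unfolding distributed_def by simp
      then show ?thesis unfolding normal_meas_def \<sigma>_def[symmetric] using False
        by (simp cong: distr_cong)
    qed
    show ?thesis
      apply (rule exI[of _ \<Omega>], rule exI[of _ "\<lambda>m \<omega>. \<sigma> * Yseq m \<omega>"], rule exI[of _ "\<lambda>\<omega>. \<sigma> * Y \<omega>"])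
      using d1[unfolded F_def PI_def] d2 ps conv
      by (auto intro!: tendsto_mult_left simp del: sum_of_bool_eq)
  qed
qed


lemma AE_snd_pair:
  assumes "sigma_finite_measure M1" "sigma_finite_measure M2" "AE y in M2. Q y"
  shows "AE z in M1 \<Otimes>\<^sub>M M2. Q (snd z)"
proof -
  interpret pair_sigma_finite M1 M2 using assms(1,2) by (simp add: pair_sigma_finite_def)
  from assms(3) obtain N where N: "{y\<in>space M2. \<not> Q y} \<subseteq> N" "emeasure M2 N = 0" "N \<in> sets M2"
    by (auto elim: AE_E)
  have "emeasure (M1 \<Otimes>\<^sub>M M2) (space M1 \<times> N) = emeasure M1 (space M1) * emeasure M2 N"
    by (rule M2.emeasure_pair_measure_Times) (use N in auto)
  then have "space M1 \<times> N \<in> null_sets (M1 \<Otimes>\<^sub>M M2)"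
    using N by (intro null_setsI) auto
  moreover have "{z\<in>space (M1 \<Otimes>\<^sub>M M2). \<not> Q (snd z)} \<subseteq> space M1 \<times> N"
    using N by (auto simp: space_pair_measure)
  ultimately show ?thesis by (rule AE_I')
qed

lemma AE_fst_pair:
  assumes "sigma_finite_measure M1" "sigma_finite_measure M2" "AE y in M1. Q y"
  shows "AE z in M1 \<Otimes>\<^sub>M M2. Q (fst z)"
proof -
  interpret pair_sigma_finite M1 M2 using assms(1,2) by (simp add: pair_sigma_finite_def)
  from assms(3) obtain N where N: "{y\<in>space M1. \<not> Q y} \<subseteq> N" "emeasure M1 N = 0" "N \<in> sets M1"
    by (auto elim: AE_E)
  have "emeasure (M1 \<Otimes>\<^sub>M M2) (N \<times> space M2) = emeasure M1 N * emeasure M2 (space M2)"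
    by (rule M2.emeasure_pair_measure_Times) (use N in auto)
  then have "N \<times> space M2 \<in> null_sets (M1 \<Otimes>\<^sub>M M2)"
    using N by (intro null_setsI) auto
  moreover have "{z\<in>space (M1 \<Otimes>\<^sub>M M2). \<not> Q (fst z)} \<subseteq> N \<times> space M2"
    using N by (auto simp: space_pair_measure)
  ultimately show ?thesis by (rule AE_I')
qed

lemma comb:
  fixes \<Omega>1 \<Omega>2 :: "real measure" and Y1m Y2m :: "nat \<Rightarrow> real \<Rightarrow> real" and Y1 Y2 :: "real \<Rightarrow> real"
    and m0 m1 :: "nat \<Rightarrow> nat"
  assumes P1: "prob_space \<Omega>1" and P2: "prob_space \<Omega>2"
    and [measurable]: "\<And>m. Y1m m \<in> borel_measurable \<Omega>1" "\<And>m. Y2m m \<in> borel_measurable \<Omega>2"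
    "Y1 \<in> borel_measurable \<Omega>1" "Y2 \<in> borel_measurable \<Omega>2"
    and c1: "AE \<omega> in \<Omega>1. (\<lambda>m. Y1m m \<omega>) \<longlonglongrightarrow> Y1 \<omega>"
    and c2: "AE \<omega> in \<Omega>2. (\<lambda>m. Y2m m \<omega>) \<longlonglongrightarrow> Y2 \<omega>"
    and l0: "filterlim m0 at_top sequentially" and l1: "filterlim m1 at_top sequentially"
  shows "weak_conv_meas (\<lambda>n. distr \<Omega>1 borel (Y1m (m0 n)) \<Otimes>\<^sub>M distr \<Omega>2 borel (Y2m (m1 n)))
           (distr \<Omega>1 borel Y1 \<Otimes>\<^sub>M distr \<Omega>2 borel Y2)"
  unfolding weak_conv_meas_def
proof (intro allI impI)
  fix f :: "real \<times> real \<Rightarrow> real"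
  assume fc: "continuous_on UNIV f" and fb: "bounded (range f)"
  interpret O1: prob_space \<Omega>1 by (rule P1)
  interpret O2: prob_space \<Omega>2 by (rule P2)
  interpret pair_prob_space \<Omega>1 \<Omega>2 by unfold_locales
  obtain B where B: "\<And>x. \<bar>f x\<bar> \<le> B" using fb unfolding bounded_iff by auto
  have fm: "f \<in> borel_measurable (borel \<Otimes>\<^sub>M borel)"
    unfolding borel_prod using borel_measurable_continuous_onI[OF fc] .
  have sf: "sigma_finite_measure (distr \<Omega>2 borel g)" if "g \<in> borel_measurable \<Omega>2" for g
    using O2.prob_space_distr[OF that] by (simp add: prob_space_imp_sigma_finite)
  have eq: "(\<integral>z. f z \<partial>(distr \<Omega>1 borel g1 \<Otimes>\<^sub>M distr \<Omega>2 borel g2)) =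
     (\<integral>z. f (g1 (fst z), g2 (snd z)) \<partial>(\<Omega>1 \<Otimes>\<^sub>M \<Omega>2))"
    if [measurable]: "g1 \<in> borel_measurable \<Omega>1" "g2 \<in> borel_measurable \<Omega>2" for g1 g2
  proof -
    have D: "distr \<Omega>1 borel g1 \<Otimes>\<^sub>M distr \<Omega>2 borel g2 = distr (\<Omega>1 \<Otimes>\<^sub>M \<Omega>2) (borel \<Otimes>\<^sub>M borel) (\<lambda>(x, y). (g1 x, g2 y))"
      by (rule pair_measure_distr) (auto intro: sf)
    have gm: "(\<lambda>(x, y). (g1 x, g2 y)) \<in> measurable (\<Omega>1 \<Otimes>\<^sub>M \<Omega>2) (borel \<Otimes>\<^sub>M borel)"
      by measurable
    show ?thesis
      unfolding D integral_distr[OF gm fm] by (simp add: case_prod_beta)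
  qed
  show "(\<lambda>n. \<integral>z. f z \<partial>(distr \<Omega>1 borel (Y1m (m0 n)) \<Otimes>\<^sub>M distr \<Omega>2 borel (Y2m (m1 n))))
      \<longlonglongrightarrow> (\<integral>z. f z \<partial>(distr \<Omega>1 borel Y1 \<Otimes>\<^sub>M distr \<Omega>2 borel Y2))"
    unfolding eq[OF assms(3,4)] eq[OF assms(5,6)]
  proof (rule integral_dominated_convergence[where w="\<lambda>_. B"])
    have fm': "f \<in> borel_measurable borel" using borel_measurable_continuous_onI[OF fc] .
    show "(\<lambda>z. f (Y1 (fst z), Y2 (snd z))) \<in> borel_measurable (\<Omega>1 \<Otimes>\<^sub>M \<Omega>2)"
      using fm' by measurable
    show "(\<lambda>z. f (Y1m (m0 i) (fst z), Y2m (m1 i) (snd z))) \<in> borel_measurable (\<Omega>1 \<Otimes>\<^sub>M \<Omega>2)" for i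
      using fm' by measurable
    show "integrable (\<Omega>1 \<Otimes>\<^sub>M \<Omega>2) (\<lambda>_. B)" by simp
    show "AE x in \<Omega>1 \<Otimes>\<^sub>M \<Omega>2. norm (f (Y1m (m0 i) (fst x), Y2m (m1 i) (snd x))) \<le> B" for i
      using B by simp
    have a1: "AE z in \<Omega>1 \<Otimes>\<^sub>M \<Omega>2. (\<lambda>m. Y1m m (fst z)) \<longlonglongrightarrow> Y1 (fst z)"
      by (rule AE_fst_pair[OF _ _ c1]) (auto intro: prob_space_imp_sigma_finite P1 P2)
    have a2: "AE z in \<Omega>1 \<Otimes>\<^sub>M \<Omega>2. (\<lambda>m. Y2m m (snd z)) \<longlonglongrightarrow> Y2 (snd z)"
      by (rule AE_snd_pair[OF _ _ c2]) (auto intro: prob_space_imp_sigma_finite P1 P2)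
    show "AE z in \<Omega>1 \<Otimes>\<^sub>M \<Omega>2. (\<lambda>i. f (Y1m (m0 i) (fst z), Y2m (m1 i) (snd z))) \<longlonglongrightarrow> f (Y1 (fst z), Y2 (snd z))"
      using a1 a2
    proof eventually_elim
      case (elim z)
      have t1: "(\<lambda>i. Y1m (m0 i) (fst z)) \<longlonglongrightarrow> Y1 (fst z)"
        using filterlim_compose[OF elim(1) l0] by (simp add: o_def)
      have t2: "(\<lambda>i. Y2m (m1 i) (snd z)) \<longlonglongrightarrow> Y2 (snd z)"
        using filterlim_compose[OF elim(2) l1] by (simp add: o_def)
      have "isCont f (Y1 (fst z), Y2 (snd z))"
        using fc by (simp add: continuous_on_eq_continuous_at)
      then show ?case by (rule isCont_tendsto_compose) (intro tendsto_Pair t1 t2)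
    qed
  qed
qed


lemma V_eq:
  fixes N :: nat and b :: bool
  shows "real (card {k \<in> {..<N}. (if b then x k else \<not> x k) \<and> step \<phi> \<gamma> (x k) (fst (\<omega> k)) (snd (\<omega> k))})
    = (\<Sum>k\<in>{k \<in> {..<N}. if b then x k else \<not> x k}. of_bool (step \<phi> \<gamma> b (fst (\<omega> k)) (snd (\<omega> k))))"
proof -
  have "{k \<in> {..<N}. (if b then x k else \<not> x k) \<and> step \<phi> \<gamma> (x k) (fst (\<omega> k)) (snd (\<omega> k))}
     = {k \<in> {..<N}. if b then x k else \<not> x k} \<inter> {k. step \<phi> \<gamma> b (fst (\<omega> k)) (snd (\<omega> k))}"
    by (cases b) auto
  then show ?thesis by simp
qed

theorem proposition9:
  fixes \<phi> \<gamma> \<theta> :: real and N :: "nat \<Rightarrow> nat" and x :: "nat \<Rightarrow> nat \<Rightarrow> bool"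
  assumes "0 < \<phi>" "\<phi> < 1" "0 < \<gamma>" "\<gamma> < 1" "\<phi> + \<gamma> \<ge> 1"
    and "0 \<le> \<theta>" "\<theta> \<le> 1"
    and "filterlim (\<lambda>n. cnt0 (x n) (N n)) at_top sequentially"
    and "filterlim (\<lambda>n. cnt1 (x n) (N n)) at_top sequentially"
  shows "weak_conv_meas
           (\<lambda>n. distr (trans_space \<theta> (N n)) borel
                  (\<lambda>\<omega>. (V01 \<phi> \<gamma> \<theta> (x n) (N n) \<omega>, V11 \<phi> \<gamma> \<theta> (x n) (N n) \<omega>)))
           (normal_meas 0 (q01 \<phi> \<gamma> \<theta> * (1 - q01 \<phi> \<gamma> \<theta>))
              \<Otimes>\<^sub>M normal_meas 0 (q11 \<phi> \<gamma> \<theta> * (1 - q11 \<phi> \<gamma> \<theta>)))"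
proof -
  define C where "C = coord_meas \<theta>"
  have C: "prob_space C" unfolding C_def by (rule prob_space_coord)
  define P0 where "P0 = (\<lambda>c. step \<phi> \<gamma> False (fst c) (snd c))"
  define P1 where "P1 = (\<lambda>c. step \<phi> \<gamma> True (fst c) (snd c))"
  have P0m[measurable]: "Measurable.pred C P0" unfolding P0_def C_def by (rule step_meas)
  have P1m[measurable]: "Measurable.pred C P1" unfolding P1_def C_def by (rule step_meas)
  define a where "a = q01 \<phi> \<gamma> \<theta>"
  define b where "b = q11 \<phi> \<gamma> \<theta>"
  have a: "a = (\<integral>c. of_bool (P0 c) \<partial>C)" unfolding a_def P0_def C_def using q01_eq[OF assms(1-7)] by simp
  have b: "b = (\<integral>c. of_bool (P1 c) \<partial>C)" unfolding b_def P1_def C_def using q11_eq[OF assms(1-7)] by simp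
  obtain \<Omega>1 :: "real measure" and Y1m Y1 where O1: "prob_space \<Omega>1" and [measurable]: "\<And>m. Y1m m \<in> borel_measurable \<Omega>1"
    and [measurable]: "Y1 \<in> borel_measurable \<Omega>1"
    and d1: "\<And>m. distr \<Omega>1 borel (Y1m m) = distr (PiM UNIV (\<lambda>_. C)) borel
          (\<lambda>\<omega>. ((\<Sum>i<m. of_bool (P0 (\<omega> i))) - real m * a) / sqrt (real m))"
    and dd1: "distr \<Omega>1 borel Y1 = normal_meas 0 (a * (1 - a))"
    and c1: "AE \<omega> in \<Omega>1. (\<lambda>m. Y1m m \<omega>) \<longlonglongrightarrow> Y1 \<omega>"
    using rep[OF C P0m a] by metis
  obtain \<Omega>2 :: "real measure" and Y2m Y2 where O2: "prob_space \<Omega>2" and [measurable]: "\<And>m. Y2m m \<in> borel_measurable \<Omega>2"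
    and [measurable]: "Y2 \<in> borel_measurable \<Omega>2"
    and d2: "\<And>m. distr \<Omega>2 borel (Y2m m) = distr (PiM UNIV (\<lambda>_. C)) borel
          (\<lambda>\<omega>. ((\<Sum>i<m. of_bool (P1 (\<omega> i))) - real m * b) / sqrt (real m))"
    and dd2: "distr \<Omega>2 borel Y2 = normal_meas 0 (b * (1 - b))"
    and c2: "AE \<omega> in \<Omega>2. (\<lambda>m. Y2m m \<omega>) \<longlonglongrightarrow> Y2 \<omega>"
    using rep[OF C P1m b] by metis
  have key: "distr (trans_space \<theta> (N n)) borel
                  (\<lambda>\<omega>. (V01 \<phi> \<gamma> \<theta> (x n) (N n) \<omega>, V11 \<phi> \<gamma> \<theta> (x n) (N n) \<omega>))
     = distr \<Omega>1 borel (Y1m (cnt0 (x n) (N n))) \<Otimes>\<^sub>M distr \<Omega>2 borel (Y2m (cnt1 (x n) (N n)))" for n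
  proof -
    define A where "A = {k \<in> {..<N n}. \<not> x n k}"
    define B where "B = {k \<in> {..<N n}. x n k}"
    define m0 where "m0 = cnt0 (x n) (N n)"
    define m1 where "m1 = cnt1 (x n) (N n)"
    have m0: "card A = m0" unfolding A_def m0_def cnt0_def ..
    have m1: "card B = m1" unfolding B_def m1_def cnt1_def ..
    define h1 where "h1 = (\<lambda>s. (s - real m0 * a) / sqrt (real m0))"
    define h2 where "h2 = (\<lambda>s. (s - real m1 * b) / sqrt (real m1))"
    have [measurable]: "h1 \<in> borel_measurable borel" "h2 \<in> borel_measurable borel"
      unfolding h1_def h2_def by measurable
    define g0 where "g0 = (\<lambda>c. of_bool (P0 c) :: real)"
    define g1 where "g1 = (\<lambda>c. of_bool (P1 c) :: real)"
    have [measurable]: "g0 \<in> borel_measurable C" "g1 \<in> borel_measurable C"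
      unfolding g0_def g1_def by measurable
    have v0: "V01 \<phi> \<gamma> \<theta> (x n) (N n) \<omega> = h1 (\<Sum>k\<in>A. g0 (\<omega> k))" for \<omega>
      using V_eq[where b=False and x="x n" and N="N n" and \<omega>=\<omega> and \<phi>=\<phi> and \<gamma>=\<gamma>]
      unfolding V01_def cnt01_def h1_def g0_def P0_def A_def m0_def a_def
      by (simp del: sum_of_bool_eq)
    have v1: "V11 \<phi> \<gamma> \<theta> (x n) (N n) \<omega> = h2 (\<Sum>k\<in>B. g1 (\<omega> k))" for \<omega>
      using V_eq[where b=True and x="x n" and N="N n" and \<omega>=\<omega> and \<phi>=\<phi> and \<gamma>=\<gamma>]
      unfolding V11_def cnt11_def h2_def g1_def P1_def B_def m1_def b_def
      by (simp del: sum_of_bool_eq)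
    have AB: "A \<subseteq> {..<N n}" "B \<subseteq> {..<N n}" "A \<inter> B = {}" unfolding A_def B_def by auto
    have "distr (trans_space \<theta> (N n)) borel
                  (\<lambda>\<omega>. (V01 \<phi> \<gamma> \<theta> (x n) (N n) \<omega>, V11 \<phi> \<gamma> \<theta> (x n) (N n) \<omega>))
        = distr (PiM {..<N n} (\<lambda>_. C)) borel (\<lambda>\<omega>. (h1 (\<Sum>k\<in>A. g0 (\<omega> k)), h2 (\<Sum>k\<in>B. g1 (\<omega> k))))"
      unfolding v0 v1 trans_space_def C_def ..
    also have "\<dots> = distr (PiM {..<N n} (\<lambda>_. C)) borel (\<lambda>\<omega>. h1 (\<Sum>k\<in>A. g0 (\<omega> k)))
      \<Otimes>\<^sub>M distr (PiM {..<N n} (\<lambda>_. C)) borel (\<lambda>\<omega>. h2 (\<Sum>k\<in>B. g1 (\<omega> k)))"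
      by (rule law_joint[OF C]) (use AB in auto)
    also have "distr (PiM {..<N n} (\<lambda>_. C)) borel (\<lambda>\<omega>. h1 (\<Sum>k\<in>A. g0 (\<omega> k)))
       = distr (PiM UNIV (\<lambda>_. C)) borel (\<lambda>\<omega>. h1 (\<Sum>i<m0. g0 (\<omega> i)))"
      by (rule law_reindex[OF C _ _ AB(1) m0]) auto
    also have "\<dots> = distr \<Omega>1 borel (Y1m m0)"
      unfolding d1 h1_def g0_def ..
    also have "distr (PiM {..<N n} (\<lambda>_. C)) borel (\<lambda>\<omega>. h2 (\<Sum>k\<in>B. g1 (\<omega> k)))
       = distr (PiM UNIV (\<lambda>_. C)) borel (\<lambda>\<omega>. h2 (\<Sum>i<m1. g1 (\<omega> i)))"
      by (rule law_reindex[OF C _ _ AB(2) m1]) auto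
    also have "\<dots> = distr \<Omega>2 borel (Y2m m1)"
      unfolding d2 h2_def g1_def ..
    finally show ?thesis unfolding m0_def m1_def .
  qed
  show ?thesis
    unfolding key a_def[symmetric] b_def[symmetric] dd1[symmetric] dd2[symmetric]
    by (rule comb[OF O1 O2 _ _ _ _ c1 c2 assms(8,9)]) auto
qed

end
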